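(* Let $L$ be isomorphic to a sublattice of a free lattice, and assume that $L\in\mathcal{N}$. Let $a,b_1,b_2,b_3,b_4,b_5\in L$ be such that $a\parallel b_i$ for all $1\le i\le 5$, $b_i<b_{i+1}$ for all $1\le i\le 4$, and $a\vee b_i<a\vee b_{i+1}$ for all $1\le i\le 4$. If $(a\vee b_4)\wedge b_5\ne b_4$, then $(a\vee b_3)\wedge b_5$ is covered by $a\vee b_3$ in $L$.
   Context: $\mathcal{N}$ denotes the variety of lattices generated by the pentagon $N_5$. For elements $u,v$, $u\parallel v$ means neither $u\le v$ nor $v\le u$. For $u<v$ in $L$, $v$ covers $u$ if there is no $w\in L$ with $u<w<v$. *)

theory Defs
  imports Main
begin

datatype 'x lterm = Var 'x | Join "'x lterm" "'x lterm" | Meet "'x lterm" "'x lterm"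

text \<open>Equality in the free lattice FL(X): the congruence on lattice terms generated by the
lattice axioms (i.e. the equational theory of lattices). FL(X) is the quotient of
'x lterm by this relation.\<close>

inductive fl_eq :: "'x lterm \<Rightarrow> 'x lterm \<Rightarrow> bool" where
  fl_refl: "fl_eq s s"
| fl_sym: "fl_eq s t \<Longrightarrow> fl_eq t s"
| fl_trans: "fl_eq s t \<Longrightarrow> fl_eq t u \<Longrightarrow> fl_eq s u"
| fl_join_cong: "fl_eq s s' \<Longrightarrow> fl_eq t t' \<Longrightarrow> fl_eq (Join s t) (Join s' t')"
| fl_meet_cong: "fl_eq s s' \<Longrightarrow> fl_eq t t' \<Longrightarrow> fl_eq (Meet s t) (Meet s' t')"
| fl_join_comm: "fl_eq (Join s t) (Join t s)"
| fl_meet_comm: "fl_eq (Meet s t) (Meet t s)"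
| fl_join_assoc: "fl_eq (Join (Join s t) u) (Join s (Join t u))"
| fl_meet_assoc: "fl_eq (Meet (Meet s t) u) (Meet s (Meet t u))"
| fl_join_idem: "fl_eq (Join s s) s"
| fl_meet_idem: "fl_eq (Meet s s) s"
| fl_absorb1: "fl_eq (Join s (Meet s t)) s"
| fl_absorb2: "fl_eq (Meet s (Join s t)) s"

definition embeds_in_free_lattice :: "('a::lattice \<Rightarrow> 'x lterm) \<Rightarrow> bool" where
  "embeds_in_free_lattice f \<longleftrightarrow>
     (\<forall>x y. fl_eq (f (sup x y)) (Join (f x) (f y))) \<and>
     (\<forall>x y. fl_eq (f (inf x y)) (Meet (f x) (f y))) \<and>
     (\<forall>x y. fl_eq (f x) (f y) \<longrightarrow> x = y)"

datatype n5 = N5_0 | N5_a | N5_b | N5_c | N5_1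

definition n5_le :: "n5 \<Rightarrow> n5 \<Rightarrow> bool" where
  "n5_le x y \<longleftrightarrow> x = N5_0 \<or> y = N5_1 \<or> x = y \<or> (x = N5_a \<and> y = N5_b)"

definition n5_join :: "n5 \<Rightarrow> n5 \<Rightarrow> n5" where
  "n5_join x y = (if n5_le x y then y else if n5_le y x then x else N5_1)"

definition n5_meet :: "n5 \<Rightarrow> n5 \<Rightarrow> n5" where
  "n5_meet x y = (if n5_le x y then x else if n5_le y x then y else N5_0)"

primrec n5_eval :: "('x \<Rightarrow> n5) \<Rightarrow> 'x lterm \<Rightarrow> n5" where
  "n5_eval v (Var x) = v x"
| "n5_eval v (Join s t) = n5_join (n5_eval v s) (n5_eval v t)"
| "n5_eval v (Meet s t) = n5_meet (n5_eval v s) (n5_eval v t)"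

primrec lt_eval :: "('x \<Rightarrow> 'a::lattice) \<Rightarrow> 'x lterm \<Rightarrow> 'a" where
  "lt_eval v (Var x) = v x"
| "lt_eval v (Join s t) = sup (lt_eval v s) (lt_eval v t)"
| "lt_eval v (Meet s t) = inf (lt_eval v s) (lt_eval v t)"

text \<open>A lattice lies in the variety \<N> generated by N5 iff it satisfies every lattice
identity (in countably many variables) that holds in N5 (Birkhoff).\<close>
definition in_var_N5 :: "'a::lattice itself \<Rightarrow> bool" where
  "in_var_N5 _ \<longleftrightarrow>
     (\<forall>s t :: nat lterm. (\<forall>v. n5_eval v s = n5_eval v t) \<longrightarrow>
        (\<forall>v :: nat \<Rightarrow> 'a. lt_eval v s = lt_eval v t))"

definition incomparable :: "'a::order \<Rightarrow> 'a \<Rightarrow> bool" where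
  "incomparable u v \<longleftrightarrow> \<not> u \<le> v \<and> \<not> v \<le> u"

definition covers :: "'a::order \<Rightarrow> 'a \<Rightarrow> bool" where
  "covers v u \<longleftrightarrow> u < v \<and> \<not> (\<exists>w. u < w \<and> w < v)"

end

theory Submission
  imports Defs
begin

fun wle :: "'x lterm \<Rightarrow> 'x lterm \<Rightarrow> bool" where
  "wle (Var x) (Var y) = (x = y)"
| "wle (Join s t) u = (wle s u \<and> wle t u)"
| "wle (Var x) (Meet u v) = (wle (Var x) u \<and> wle (Var x) v)"
| "wle (Meet s t) (Meet u v) = (wle (Meet s t) u \<and> wle (Meet s t) v)"
| "wle (Var x) (Join u v) = (wle (Var x) u \<or> wle (Var x) v)"
| "wle (Meet s t) (Var y) = (wle s (Var y) \<or> wle t (Var y))"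
| "wle (Meet s t) (Join u v) = (wle s (Join u v) \<or> wle t (Join u v) \<or> wle (Meet s t) u \<or> wle (Meet s t) v)"

lemma wle_meet_right: "wle s (Meet u v) \<longleftrightarrow> wle s u \<and> wle s v"
  by (induction s) auto

lemma wle_join_right1: "wle s u \<Longrightarrow> wle s (Join u v)"
  by (induction s) auto

lemma wle_join_right2: "wle s v \<Longrightarrow> wle s (Join u v)"
  by (induction s) auto

lemma wle_meet_left1: "wle s u \<Longrightarrow> wle (Meet s t) u"
  by (induction u) (auto simp: wle_meet_right)

lemma wle_meet_left2: "wle t u \<Longrightarrow> wle (Meet s t) u"
  by (induction u) (auto simp: wle_meet_right)

lemma wle_refl: "wle s s"
  by (induction s) (auto intro: wle_join_right1 wle_join_right2 wle_meet_left1 wle_meet_left2 simp: wle_meet_right)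

lemma wle_trans_aux:
  "size s + size t + size u = n \<Longrightarrow> wle s t \<Longrightarrow> wle t u \<Longrightarrow> wle s u"
proof (induction n arbitrary: s t u rule: less_induct)
  case (less n s t u)
  have IH: "\<And>s' t' u' :: 'a lterm. size s' + size t' + size u' < size s + size t + size u \<Longrightarrow> wle s' t' \<Longrightarrow> wle t' u' \<Longrightarrow> wle s' u'"
    using less.IH less.prems(1) by blast
  have st: "wle s t" and tu: "wle t u" using less.prems by auto
  show "wle s u"
  proof (cases "\<exists>s1 s2. s = Join s1 s2")
    case True
    then obtain s1 s2 where s: "s = Join s1 s2" by blast
    show ?thesis using st tu IH[of s1 t u] IH[of s2 t u] s by auto
  next
    case nsJ: False
    show ?thesis
    proof (cases "\<exists>u1 u2. u = Meet u1 u2")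
      case True
      then obtain u1 u2 where u: "u = Meet u1 u2" by blast
      show ?thesis using st tu IH[of s t u1] IH[of s t u2] u by (auto simp: wle_meet_right)
    next
      case nuM: False
      show ?thesis
      proof (cases t)
        case (Join t1 t2)
        have t1u: "wle t1 u" and t2u: "wle t2 u" using tu Join by auto
        show ?thesis
        proof (cases s)
          case (Var x)
          then show ?thesis using st t1u t2u IH[of s t1 u] IH[of s t2 u] Join by auto
        next
          case (Meet s1 s2)
          then show ?thesis using st t1u t2u tu IH[of s t1 u] IH[of s t2 u] IH[of s1 t u] IH[of s2 t u] Join
            by (auto intro: wle_meet_left1 wle_meet_left2)
        next
          case (Join s1 s2) then show ?thesis using nsJ by blast
        qed
      next
        case (Meet t1 t2)
        have st1: "wle s t1" and st2: "wle s t2" using st Meet by (auto simp: wle_meet_right)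
        show ?thesis
        proof (cases u)
          case (Var y)
          then show ?thesis using tu st1 st2 IH[of s t1 u] IH[of s t2 u] Meet by auto
        next
          case (Join u1 u2)
          then show ?thesis using tu st st1 st2 IH[of s t1 u] IH[of s t2 u] IH[of s t u1] IH[of s t u2] Meet
            by (auto intro: wle_join_right1 wle_join_right2)
        next
          case (Meet u1 u2) then show ?thesis using nuM by blast
        qed
      next
        case (Var z)
        show ?thesis
        proof (cases s)
          case (Var x)
          then show ?thesis using st tu \<open>t = Var z\<close> by auto
        next
          case (Meet s1 s2)
          then show ?thesis using st tu IH[of s1 t u] IH[of s2 t u] \<open>t = Var z\<close>
            by (auto intro: wle_meet_left1 wle_meet_left2)
        next
          case (Join s1 s2) then show ?thesis using nsJ by blast
        qed
      qed
    qed
  qed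
qed

lemma wle_trans: "wle s t \<Longrightarrow> wle t u \<Longrightarrow> wle s u"
  using wle_trans_aux by blast

lemma wle_join_lub: "wle s u \<Longrightarrow> wle t u \<Longrightarrow> wle (Join s t) u" by simp

lemma wle_meet_glb: "wle s t \<Longrightarrow> wle s u \<Longrightarrow> wle s (Meet t u)" by (simp add: wle_meet_right)

lemma fl_eq_wle: "fl_eq s t \<Longrightarrow> wle s t \<and> wle t s"
proof (induction rule: fl_eq.induct)
  case (fl_refl s) then show ?case by (simp add: wle_refl)
next
  case (fl_sym s t) then show ?case by simp
next
  case (fl_trans s t u) then show ?case using wle_trans by blast
next
  case (fl_join_cong s s' t t') then show ?case
    by (auto intro: wle_join_right1 wle_join_right2)
next
  case (fl_meet_cong s s' t t') then show ?case
    by (auto simp: wle_meet_right intro: wle_meet_left1 wle_meet_left2)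
next
  case (fl_join_comm s t) then show ?case
    by (auto intro: wle_join_right1 wle_join_right2 wle_refl)
next
  case (fl_meet_comm s t) then show ?case
    by (auto simp: wle_meet_right intro: wle_meet_left1 wle_meet_left2 wle_refl)
next
  case (fl_join_assoc s t u)
  have "wle s (Join s (Join t u))" by (rule wle_join_right1[OF wle_refl])
  moreover have "wle t (Join s (Join t u))" by (rule wle_join_right2[OF wle_join_right1[OF wle_refl]])
  moreover have "wle u (Join s (Join t u))" by (rule wle_join_right2[OF wle_join_right2[OF wle_refl]])
  moreover have "wle s (Join (Join s t) u)" by (rule wle_join_right1[OF wle_join_right1[OF wle_refl]])
  moreover have "wle t (Join (Join s t) u)" by (rule wle_join_right1[OF wle_join_right2[OF wle_refl]])
  moreover have "wle u (Join (Join s t) u)" by (rule wle_join_right2[OF wle_refl])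
  ultimately show ?case by simp
next
  case (fl_meet_assoc s t u)
  have "wle (Meet s (Meet t u)) s" by (rule wle_meet_left1[OF wle_refl])
  moreover have "wle (Meet s (Meet t u)) t" by (rule wle_meet_left2[OF wle_meet_left1[OF wle_refl]])
  moreover have "wle (Meet s (Meet t u)) u" by (rule wle_meet_left2[OF wle_meet_left2[OF wle_refl]])
  moreover have "wle (Meet (Meet s t) u) s" by (rule wle_meet_left1[OF wle_meet_left1[OF wle_refl]])
  moreover have "wle (Meet (Meet s t) u) t" by (rule wle_meet_left1[OF wle_meet_left2[OF wle_refl]])
  moreover have "wle (Meet (Meet s t) u) u" by (rule wle_meet_left2[OF wle_refl])
  ultimately show ?case by (simp add: wle_meet_right)
next
  case (fl_join_idem s) then show ?case
    by (auto intro: wle_join_right1 wle_refl)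
next
  case (fl_meet_idem s) then show ?case
    by (auto simp: wle_meet_right intro: wle_meet_left1 wle_refl)
next
  case (fl_absorb1 s t) then show ?case
    by (auto intro: wle_join_right1 wle_refl wle_meet_left1)
next
  case (fl_absorb2 s t) then show ?case
    by (auto simp: wle_meet_right intro: wle_join_right1 wle_refl wle_meet_left1)
qed

definition flle :: "'x lterm \<Rightarrow> 'x lterm \<Rightarrow> bool" where
  "flle s t \<longleftrightarrow> fl_eq (Meet s t) s"

lemma fl_eq_trans3: "fl_eq a b \<Longrightarrow> fl_eq b c \<Longrightarrow> fl_eq c d \<Longrightarrow> fl_eq a d"
  by (meson fl_trans)

lemma flle_refl: "flle s s" unfolding flle_def by (rule fl_meet_idem)

lemma flle_trans: "flle s t \<Longrightarrow> flle t u \<Longrightarrow> flle s u"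
  unfolding flle_def
proof -
  assume st: "fl_eq (Meet s t) s" and tu: "fl_eq (Meet t u) t"
  have 0: "fl_eq (Meet s u) (Meet (Meet s t) u)" by (rule fl_meet_cong[OF fl_sym[OF st] fl_refl])
  have "fl_eq (Meet (Meet s t) u) (Meet s (Meet t u))" by (rule fl_meet_assoc)
  then have 1: "fl_eq (Meet s u) (Meet s (Meet t u))" using 0 by (meson fl_trans)
  have 2: "fl_eq (Meet s (Meet t u)) (Meet s t)" by (rule fl_meet_cong[OF fl_refl tu])
  show "fl_eq (Meet s u) s" using 1 2 st by (meson fl_trans)
qed

lemma flle_meet1: "flle (Meet s t) s"
  unfolding flle_def
proof -
  have "fl_eq (Meet (Meet s t) s) (Meet s (Meet s t))" by (rule fl_meet_comm)
  moreover have "fl_eq (Meet s (Meet s t)) (Meet (Meet s s) t)" by (rule fl_sym[OF fl_meet_assoc])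
  moreover have "fl_eq (Meet (Meet s s) t) (Meet s t)" by (rule fl_meet_cong[OF fl_meet_idem fl_refl])
  ultimately show "fl_eq (Meet (Meet s t) s) (Meet s t)" by (meson fl_trans)
qed

lemma flle_meet2: "flle (Meet s t) t"
  unfolding flle_def
proof -
  have "fl_eq (Meet (Meet s t) t) (Meet s (Meet t t))" by (rule fl_meet_assoc)
  moreover have "fl_eq (Meet s (Meet t t)) (Meet s t)" by (rule fl_meet_cong[OF fl_refl fl_meet_idem])
  ultimately show "fl_eq (Meet (Meet s t) t) (Meet s t)" by (meson fl_trans)
qed

lemma flle_glb: "flle r s \<Longrightarrow> flle r t \<Longrightarrow> flle r (Meet s t)"
  unfolding flle_def
proof -
  assume rs: "fl_eq (Meet r s) r" and rt: "fl_eq (Meet r t) r"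
  have "fl_eq (Meet r (Meet s t)) (Meet (Meet r s) t)" by (rule fl_sym[OF fl_meet_assoc])
  moreover have "fl_eq (Meet (Meet r s) t) (Meet r t)" by (rule fl_meet_cong[OF rs fl_refl])
  ultimately show "fl_eq (Meet r (Meet s t)) r" using rt by (meson fl_trans)
qed

lemma flle_joinD: "flle s u \<Longrightarrow> fl_eq (Join s u) u"
  unfolding flle_def
proof -
  assume su: "fl_eq (Meet s u) s"
  have "fl_eq (Join s u) (Join (Meet s u) u)" by (rule fl_join_cong[OF fl_sym[OF su] fl_refl])
  moreover have "fl_eq (Join (Meet s u) u) (Join u (Meet s u))" by (rule fl_join_comm)
  moreover have "fl_eq (Join u (Meet s u)) (Join u (Meet u s))" by (rule fl_join_cong[OF fl_refl fl_meet_comm])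
  moreover have "fl_eq (Join u (Meet u s)) u" by (rule fl_absorb1)
  ultimately show "fl_eq (Join s u) u" by (meson fl_trans)
qed

lemma flle_joinI: "fl_eq (Join s u) u \<Longrightarrow> flle s u"
  unfolding flle_def
proof -
  assume su: "fl_eq (Join s u) u"
  have "fl_eq (Meet s u) (Meet s (Join s u))" by (rule fl_meet_cong[OF fl_refl fl_sym[OF su]])
  moreover have "fl_eq (Meet s (Join s u)) s" by (rule fl_absorb2)
  ultimately show "fl_eq (Meet s u) s" by (meson fl_trans)
qed

lemma flle_join1: "flle s (Join s t)"
  unfolding flle_def by (rule fl_absorb2)

lemma flle_join2: "flle t (Join s t)"
  unfolding flle_def
proof -
  have "fl_eq (Meet t (Join s t)) (Meet t (Join t s))" by (rule fl_meet_cong[OF fl_refl fl_join_comm])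
  moreover have "fl_eq (Meet t (Join t s)) t" by (rule fl_absorb2)
  ultimately show "fl_eq (Meet t (Join s t)) t" by (meson fl_trans)
qed

lemma flle_lub: "flle s u \<Longrightarrow> flle t u \<Longrightarrow> flle (Join s t) u"
proof -
  assume su: "flle s u" and tu: "flle t u"
  have a: "fl_eq (Join s u) u" and b: "fl_eq (Join t u) u" using su tu by (auto intro: flle_joinD)
  have "fl_eq (Join (Join s t) u) (Join s (Join t u))" by (rule fl_join_assoc)
  moreover have "fl_eq (Join s (Join t u)) (Join s u)" by (rule fl_join_cong[OF fl_refl b])
  ultimately have "fl_eq (Join (Join s t) u) u" using a by (meson fl_trans)
  then show ?thesis by (rule flle_joinI)
qed

lemma wle_flle: "wle s t \<Longrightarrow> flle s t"
proof (induction s t rule: wle.induct)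
  case (1 x y) then show ?case by (simp add: flle_refl)
next
  case (2 s t u) then show ?case by (simp add: flle_lub)
next
  case (3 x u v) then show ?case by (simp add: flle_glb)
next
  case (4 s t u v) then show ?case by (simp add: flle_glb)
next
  case (5 x u v) then show ?case by (auto intro: flle_trans flle_join1 flle_join2)
next
  case (6 s t y) then show ?case by (auto intro: flle_trans flle_meet1 flle_meet2)
next
  case (7 s t u v) then show ?case by (auto intro: flle_trans flle_meet1 flle_meet2 flle_join1 flle_join2)
qed

context
  fixes f :: "'a::lattice \<Rightarrow> 'x lterm"
  assumes emb: "embeds_in_free_lattice f"
begin

lemma emb_sup: "fl_eq (f (sup x y)) (Join (f x) (f y))" for x y :: 'a using emb unfolding embeds_in_free_lattice_def by blast
lemma emb_inf: "fl_eq (f (inf x y)) (Meet (f x) (f y))" for x y :: 'a using emb unfolding embeds_in_free_lattice_def by blast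
lemma emb_inj: "fl_eq (f x) (f y) \<Longrightarrow> x = y" for x y :: 'a using emb unfolding embeds_in_free_lattice_def by blast

lemma emb_le_iff: "x \<le> y \<longleftrightarrow> wle (f x) (f y)" for x y :: 'a
proof
  assume "x \<le> y"
  then have "inf x y = x" by (simp add: inf_absorb1)
  then have "wle (f x) (Meet (f x) (f y))" using fl_eq_wle[OF emb_inf[of x y]] by simp
  then show "wle (f x) (f y)" by (simp add: wle_meet_right)
next
  assume "wle (f x) (f y)"
  then have "fl_eq (Meet (f x) (f y)) (f x)" using wle_flle flle_def by blast
  then have "fl_eq (f (inf x y)) (f x)" using emb_inf[of x y] fl_trans by blast
  then have "inf x y = x" by (rule emb_inj)
  then show "x \<le> y" by (metis inf.orderI)
qed

lemma emb_W:
  fixes x y u v :: 'a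
  assumes "inf x y \<le> sup u v"
  shows "x \<le> sup u v \<or> y \<le> sup u v \<or> inf x y \<le> u \<or> inf x y \<le> v"
proof -
  have 1: "wle (f (inf x y)) (f (sup u v))" using assms emb_le_iff by blast
  have 2: "wle (Meet (f x) (f y)) (f (inf x y))" using fl_eq_wle[OF emb_inf[of x y]] by simp
  have 3: "wle (f (sup u v)) (Join (f u) (f v))" using fl_eq_wle[OF emb_sup[of u v]] by simp
  have 4: "wle (Join (f u) (f v)) (f (sup u v))" using fl_eq_wle[OF emb_sup[of u v]] by simp
  have 5: "wle (f (inf x y)) (Meet (f x) (f y))" using fl_eq_wle[OF emb_inf[of x y]] by simp
  have "wle (Meet (f x) (f y)) (Join (f u) (f v))" using 1 2 3 wle_trans by blast
  then have "wle (f x) (Join (f u) (f v)) \<or> wle (f y) (Join (f u) (f v)) \<or> wle (Meet (f x) (f y)) (f u) \<or> wle (Meet (f x) (f y)) (f v)"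
    by simp
  then show ?thesis
    using 4 5 wle_trans emb_le_iff by blast
qed

end


definition alln5 :: "n5 list" where "alln5 = [N5_0, N5_a, N5_b, N5_c, N5_1]"

lemma alln5_set: "x \<in> set alln5" by (cases x) (auto simp: alln5_def)

lemma n5_le_simps[simp]:
  "n5_le N5_0 y" "n5_le x N5_1" "n5_le x x"
  "n5_le N5_a N5_b \<longleftrightarrow> True" "n5_le N5_a N5_0 \<longleftrightarrow> False" "n5_le N5_a N5_c \<longleftrightarrow> False"
  "n5_le N5_b N5_0 \<longleftrightarrow> False" "n5_le N5_b N5_a \<longleftrightarrow> False" "n5_le N5_b N5_c \<longleftrightarrow> False"
  "n5_le N5_c N5_0 \<longleftrightarrow> False" "n5_le N5_c N5_a \<longleftrightarrow> False" "n5_le N5_c N5_b \<longleftrightarrow> False"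
  "n5_le N5_1 N5_0 \<longleftrightarrow> False" "n5_le N5_1 N5_a \<longleftrightarrow> False" "n5_le N5_1 N5_b \<longleftrightarrow> False" "n5_le N5_1 N5_c \<longleftrightarrow> False"
  by (auto simp: n5_le_def)

lemma n5_join_simps[simp]:
  "n5_join N5_0 y = y" "n5_join x N5_0 = x" "n5_join N5_1 y = N5_1" "n5_join x N5_1 = N5_1" "n5_join x x = x"
  "n5_join N5_a N5_b = N5_b" "n5_join N5_b N5_a = N5_b" "n5_join N5_a N5_c = N5_1" "n5_join N5_c N5_a = N5_1"
  "n5_join N5_b N5_c = N5_1" "n5_join N5_c N5_b = N5_1"
  by (auto simp: n5_join_def n5_le_def)

lemma n5_meet_simps[simp]:
  "n5_meet N5_0 y = N5_0" "n5_meet x N5_0 = N5_0" "n5_meet N5_1 y = y" "n5_meet x N5_1 = x" "n5_meet x x = x"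
  "n5_meet N5_a N5_b = N5_a" "n5_meet N5_b N5_a = N5_a" "n5_meet N5_a N5_c = N5_0" "n5_meet N5_c N5_a = N5_0"
  "n5_meet N5_b N5_c = N5_0" "n5_meet N5_c N5_b = N5_0"
  by (auto simp: n5_meet_def n5_le_def)

lemma n5_le_join1: "n5_le x (n5_join x y)" by (cases x; cases y) auto
lemma n5_le_meet1: "n5_le (n5_meet x y) x" by (cases x; cases y) auto
lemma n5_le_meet2: "n5_le (n5_meet x y) y" by (cases x; cases y) auto
lemma n5_glb: "n5_le z x \<Longrightarrow> n5_le z y \<Longrightarrow> n5_le z (n5_meet x y)" by (cases x; cases y; cases z) auto
lemma n5_le_trans: "n5_le x y \<Longrightarrow> n5_le y z \<Longrightarrow> n5_le x z" by (cases x; cases y; cases z) auto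
lemma n5_lub: "n5_le x z \<Longrightarrow> n5_le y z \<Longrightarrow> n5_le (n5_join x y) z" by (cases x; cases y; cases z) auto
lemma n5_le_join2: "n5_le y (n5_join x y)" by (cases x; cases y) auto

primrec subst :: "(nat \<Rightarrow> nat lterm) \<Rightarrow> nat lterm \<Rightarrow> nat lterm" where
  "subst g (Var i) = g i"
| "subst g (Join s t) = Join (subst g s) (subst g t)"
| "subst g (Meet s t) = Meet (subst g s) (subst g t)"

primrec vars :: "nat lterm \<Rightarrow> nat set" where
  "vars (Var i) = {i}"
| "vars (Join s t) = vars s \<union> vars t"
| "vars (Meet s t) = vars s \<union> vars t"

lemma n5_eval_subst: "n5_eval v (subst g s) = n5_eval (\<lambda>i. n5_eval v (g i)) s"
  by (induction s) auto

lemma lt_eval_subst: "lt_eval v (subst g s) = lt_eval (\<lambda>i. lt_eval v (g i)) s"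
  by (induction s) auto

lemma n5_eval_cong: "(\<And>i. i \<in> vars s \<Longrightarrow> v i = v' i) \<Longrightarrow> n5_eval v s = n5_eval v' s"
  by (induction s) auto

definition sig :: "nat \<Rightarrow> nat lterm" where
  "sig i = (if i = 0 then Var 0 else if i = 1 then Var 1 else if i = 2 then Join (Var 1) (Var 2)
     else if i = 3 then Join (Join (Var 1) (Var 2)) (Var 3)
     else if i = 4 then Join (Join (Join (Var 1) (Var 2)) (Var 3)) (Var 4)
     else if i = 5 then Meet (Join (Meet (Join (Var 0) (Join (Var 1) (Var 2))) (Join (Join (Join (Var 1) (Var 2)) (Var 3)) (Var 4))) (Var 5)) (Join (Var 0) (Join (Var 1) (Var 2)))
     else Var i)"

definition rel5 :: "n5 \<Rightarrow> n5 \<Rightarrow> n5 \<Rightarrow> n5 \<Rightarrow> bool" where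
  "rel5 x0 x2 x4 x5 \<longleftrightarrow> n5_le (n5_meet (n5_join x0 x2) x4) x5 \<and> n5_le x5 (n5_join x0 x2)"

definition PL :: "n5 list list" where
  "PL = [[x0,x1,x2,x3,x4,x5]. x0 \<leftarrow> alln5, x1 \<leftarrow> alln5, x2 \<leftarrow> filter (n5_le x1) alln5,
      x3 \<leftarrow> filter (n5_le x2) alln5, x4 \<leftarrow> filter (n5_le x3) alln5, x5 \<leftarrow> filter (rel5 x0 x2 x4) alln5]"

lemma PL_mem: "n5_le x1 x2 \<Longrightarrow> n5_le x2 x3 \<Longrightarrow> n5_le x3 x4 \<Longrightarrow> rel5 x0 x2 x4 x5 \<Longrightarrow> [x0,x1,x2,x3,x4,x5] \<in> set PL"
  unfolding PL_def apply (simp add: image_iff) using alln5_set by blast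

definition chk :: "nat lterm \<Rightarrow> nat lterm \<Rightarrow> bool" where
  "chk s t \<longleftrightarrow> vars s \<subseteq> {..<6} \<and> vars t \<subseteq> {..<6} \<and> list_all (\<lambda>p. n5_eval (\<lambda>i. p ! i) s = n5_eval (\<lambda>i. p ! i) t) PL"

lemma chk_n5:
  assumes "chk s t"
  shows "n5_eval v (subst sig s) = n5_eval v (subst sig t)"
proof -
  let ?w = "\<lambda>i. n5_eval v (sig i)"
  let ?p = "[?w 0, ?w 1, ?w 2, ?w 3, ?w 4, ?w 5]"
  have mem: "?p \<in> set PL"
    apply (rule PL_mem)
    apply (simp_all add: sig_def rel5_def n5_le_join1 n5_le_meet1 n5_le_meet2)
    apply (rule n5_glb)
     apply (rule n5_le_join1)
    apply (rule n5_le_meet1)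
    done
  have eq: "\<And>u. vars u \<subseteq> {..<6} \<Longrightarrow> n5_eval ?w u = n5_eval (\<lambda>i. ?p ! i) u"
  proof (rule n5_eval_cong)
    fix u i assume "vars u \<subseteq> {..<6}" "i \<in> vars u"
    then have "i < 6" by auto
    then show "?w i = ?p ! i"
      by (auto simp: less_Suc_eq numeral_eq_Suc)
  qed
  have "n5_eval (\<lambda>i. ?p ! i) s = n5_eval (\<lambda>i. ?p ! i) t"
    using assms mem unfolding chk_def list_all_iff by blast
  then show ?thesis using eq assms unfolding chk_def by (simp add: n5_eval_subst)
qed


definition substX :: "nat lterm \<Rightarrow> nat lterm \<Rightarrow> nat lterm" where
  "substX Q e = subst (\<lambda>i. if i = 6 then e else Var i) Q"

lemma poly: "lt_eval V u = lt_eval V v \<Longrightarrow> lt_eval V (substX Q u) = lt_eval V (substX Q v)"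
  unfolding substX_def by (induction Q) auto

lemma AE: "lt_eval V p \<le> lt_eval V q \<Longrightarrow> lt_eval V (Meet p q) = lt_eval V p"
  by (simp add: inf_absorb1)

definition relL :: "(nat \<Rightarrow> 'a::lattice) \<Rightarrow> bool" where
  "relL V \<longleftrightarrow> V 1 \<le> V 2 \<and> V 2 \<le> V 3 \<and> V 3 \<le> V 4 \<and> inf (sup (V 0) (V 2)) (V 4) \<le> V 5 \<and> V 5 \<le> sup (V 0) (V 2)"

lemma sig_id: "relL V \<Longrightarrow> lt_eval V (sig i) = V i"
proof -
  assume r: "relL V"
  then have a: "V 1 \<le> V 2" "V 2 \<le> V 3" "V 3 \<le> V 4" "inf (sup (V 0) (V 2)) (V 4) \<le> V 5" "V 5 \<le> sup (V 0) (V 2)"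
    unfolding relL_def by auto
  have b: "sup (V 1) (V 2) = V 2" using a by (simp add: sup_absorb2)
  have c: "sup (V 2) (V 3) = V 3" using a by (simp add: sup_absorb2)
  have d: "sup (V 3) (V 4) = V 4" using a by (simp add: sup_absorb2)
  have e: "sup (inf (sup (V 0) (V 2)) (V 4)) (V 5) = V 5" using a by (simp add: sup_absorb2)
  have f: "inf (V 5) (sup (V 0) (V 2)) = V 5" using a by (simp add: inf_absorb1)
  show ?thesis unfolding sig_def using b c d e f by auto
qed

lemma transfer:
  fixes V :: "nat \<Rightarrow> 'a::lattice"
  assumes inN: "in_var_N5 TYPE('a)" and r: "relL V" and c: "chk s t"
  shows "lt_eval V s = lt_eval V t"
proof -
  have "\<forall>v. n5_eval v (subst sig s) = n5_eval v (subst sig t)" using chk_n5[OF c] by blast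
  then have "lt_eval V (subst sig s) = lt_eval V (subst sig t)"
    using inN unfolding in_var_N5_def by blast
  moreover have "(\<lambda>i. lt_eval V (sig i)) = V" using sig_id[OF r] by auto
  ultimately show ?thesis by (simp add: lt_eval_subst)
qed

lemma CHK:
  fixes V :: "nat \<Rightarrow> 'a::lattice"
  assumes inN: "in_var_N5 TYPE('a)" and r: "relL V"
  shows "chk (Meet s t) s \<Longrightarrow> lt_eval V s \<le> lt_eval V t"
  using transfer[OF inN r, of "Meet s t" s] by (simp add: inf.orderI)

lemma W_t:
  fixes f :: "'a::lattice \<Rightarrow> 'x lterm" and V :: "nat \<Rightarrow> 'a"
  assumes emb: "embeds_in_free_lattice f"
  shows "lt_eval V (Meet x y) \<le> lt_eval V (Join u v) \<Longrightarrow>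
    lt_eval V x \<le> lt_eval V (Join u v) \<or> lt_eval V y \<le> lt_eval V (Join u v) \<or>
    lt_eval V (Meet x y) \<le> lt_eval V u \<or> lt_eval V (Meet x y) \<le> lt_eval V v"
  using emb_W[OF emb] by simp

lemma core:
  fixes f :: "'a::lattice \<Rightarrow> 'x lterm" and a b1 b2 b3 b4 w :: 'a
  assumes emb: "embeds_in_free_lattice f" and inN: "in_var_N5 TYPE('a)"
    and r1: "b1 \<le> b2" and r2: "b2 \<le> b3" and r3: "b3 \<le> b4"
    and r4: "inf (sup a b2) b4 \<le> w" and r5: "w \<le> sup a b2"
    and h1: "\<not> a \<le> b4" and h2: "\<not> b1 \<le> a" and h3: "\<not> sup a b2 \<le> sup a b1"
    and h4: "\<not> sup a b3 \<le> sup a b2" and h5: "\<not> sup a b4 \<le> sup a b3"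
  shows "w \<le> inf (sup a b2) b4 \<or> sup a b2 \<le> w"
proof -
  define V where "V = (\<lambda>i::nat. if i = 0 then a else if i = 1 then b1 else if i = 2 then b2
     else if i = 3 then b3 else if i = 4 then b4 else w)"
  have rel: "relL V" using r1 r2 r3 r4 r5 unfolding relL_def V_def by simp
  note hyps = h1 h2 h3 h4 h5
  have W1: "lt_eval V (Meet (Join (Var 0) (Var 1)) (Join (Var 2) (Meet (Var 0) (Var 5)))) \<le> lt_eval V (Join (Meet (Var 0) (Var 5)) (Meet (Var 2) (Join (Var 0) (Var 1))))"
    by (rule CHK[OF inN rel]) (simp add: chk_def PL_def alln5_def rel5_def substX_def)
  from W_t[OF emb W1] have "lt_eval V (Join (Var 0) (Var 1)) \<le> lt_eval V (Join (Meet (Var 0) (Var 5)) (Meet (Var 2) (Join (Var 0) (Var 1)))) \<or> lt_eval V (Join (Var 2) (Meet (Var 0) (Var 5))) \<le> lt_eval V (Join (Meet (Var 0) (Var 5)) (Meet (Var 2) (Join (Var 0) (Var 1)))) \<or> lt_eval V (Meet (Join (Var 0) (Var 1)) (Join (Var 2) (Meet (Var 0) (Var 5)))) \<le> lt_eval V (Meet (Var 0) (Var 5)) \<or> lt_eval V (Meet (Join (Var 0) (Var 1)) (Join (Var 2) (Meet (Var 0) (Var 5)))) \<le> lt_eval V (Meet (Var 2) (Join (Var 0) (Var 1)))" .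
  then show ?thesis
  proof (elim disjE)
    assume A1: "lt_eval V (Join (Var 0) (Var 1)) \<le> lt_eval V (Join (Meet (Var 0) (Var 5)) (Meet (Var 2) (Join (Var 0) (Var 1))))"
    have "lt_eval V (Join (Var 0) (Var 2)) \<le> lt_eval V (substX (Join (Var 6) (Var 2)) (Join (Var 0) (Var 1)))" by (rule CHK[OF inN rel]) (simp add: chk_def PL_def alln5_def rel5_def substX_def)
    also have "... = lt_eval V (substX (Join (Var 6) (Var 2)) (Meet (Join (Var 0) (Var 1)) (Join (Meet (Var 0) (Var 5)) (Meet (Var 2) (Join (Var 0) (Var 1))))))" by (rule poly[OF AE[OF A1], symmetric])
    also have "... \<le> lt_eval V (Var 5)" by (rule CHK[OF inN rel]) (simp add: chk_def PL_def alln5_def rel5_def substX_def)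
    finally have "lt_eval V (Join (Var 0) (Var 2)) \<le> lt_eval V (Var 5)" .
    then show ?thesis using hyps by (simp add: V_def)
  next
    assume A1: "lt_eval V (Join (Var 2) (Meet (Var 0) (Var 5))) \<le> lt_eval V (Join (Meet (Var 0) (Var 5)) (Meet (Var 2) (Join (Var 0) (Var 1))))"
    have "lt_eval V (Join (Var 0) (Var 2)) \<le> lt_eval V (substX (Join (Var 6) (Var 0)) (Join (Var 2) (Meet (Var 0) (Var 5))))" by (rule CHK[OF inN rel]) (simp add: chk_def PL_def alln5_def rel5_def substX_def)
    also have "... = lt_eval V (substX (Join (Var 6) (Var 0)) (Meet (Join (Var 2) (Meet (Var 0) (Var 5))) (Join (Meet (Var 0) (Var 5)) (Meet (Var 2) (Join (Var 0) (Var 1))))))" by (rule poly[OF AE[OF A1], symmetric])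
    also have "... \<le> lt_eval V (Join (Var 0) (Var 1))" by (rule CHK[OF inN rel]) (simp add: chk_def PL_def alln5_def rel5_def substX_def)
    finally have "lt_eval V (Join (Var 0) (Var 2)) \<le> lt_eval V (Join (Var 0) (Var 1))" .
    then show ?thesis using hyps by (simp add: V_def)
  next
    assume A1: "lt_eval V (Meet (Join (Var 0) (Var 1)) (Join (Var 2) (Meet (Var 0) (Var 5)))) \<le> lt_eval V (Meet (Var 0) (Var 5))"
    have "lt_eval V (Var 1) \<le> lt_eval V (substX (Var 6) (Meet (Join (Var 0) (Var 1)) (Join (Var 2) (Meet (Var 0) (Var 5)))))" by (rule CHK[OF inN rel]) (simp add: chk_def PL_def alln5_def rel5_def substX_def)
    also have "... = lt_eval V (substX (Var 6) (Meet (Meet (Join (Var 0) (Var 1)) (Join (Var 2) (Meet (Var 0) (Var 5)))) (Meet (Var 0) (Var 5))))" by (rule poly[OF AE[OF A1], symmetric])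
    also have "... \<le> lt_eval V (Var 0)" by (rule CHK[OF inN rel]) (simp add: chk_def PL_def alln5_def rel5_def substX_def)
    finally have "lt_eval V (Var 1) \<le> lt_eval V (Var 0)" .
    then show ?thesis using hyps by (simp add: V_def)
  next
    assume A4: "lt_eval V (Meet (Join (Var 0) (Var 1)) (Join (Var 2) (Meet (Var 0) (Var 5)))) \<le> lt_eval V (Meet (Var 2) (Join (Var 0) (Var 1)))"
    have W2: "lt_eval V (Meet (Join (Var 0) (Var 3)) (Join (Var 4) (Var 5))) \<le> lt_eval V (Join (Var 5) (Meet (Var 4) (Join (Var 0) (Var 3))))"
    proof -
      have "lt_eval V (Meet (Join (Var 0) (Var 3)) (Join (Var 4) (Var 5))) \<le> lt_eval V (substX (Join (Meet (Join (Var 6) (Var 4)) (Meet (Var 0) (Join (Var 4) (Var 5)))) (Join (Var 5) (Meet (Var 4) (Join (Var 0) (Var 3))))) (Meet (Join (Var 0) (Var 1)) (Join (Var 2) (Meet (Var 0) (Var 5)))))" by (rule CHK[OF inN rel]) (simp add: chk_def PL_def alln5_def rel5_def substX_def)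
      also have "... = lt_eval V (substX (Join (Meet (Join (Var 6) (Var 4)) (Meet (Var 0) (Join (Var 4) (Var 5)))) (Join (Var 5) (Meet (Var 4) (Join (Var 0) (Var 3))))) (Meet (Meet (Join (Var 0) (Var 1)) (Join (Var 2) (Meet (Var 0) (Var 5)))) (Meet (Var 2) (Join (Var 0) (Var 1)))))" by (rule poly[OF AE[OF A4], symmetric])
      also have "... \<le> lt_eval V (Join (Var 5) (Meet (Var 4) (Join (Var 0) (Var 3))))" by (rule CHK[OF inN rel]) (simp add: chk_def PL_def alln5_def rel5_def substX_def)
      finally have "lt_eval V (Meet (Join (Var 0) (Var 3)) (Join (Var 4) (Var 5))) \<le> lt_eval V (Join (Var 5) (Meet (Var 4) (Join (Var 0) (Var 3))))" .
      then show ?thesis .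
    qed
    from W_t[OF emb W2] have "lt_eval V (Join (Var 0) (Var 3)) \<le> lt_eval V (Join (Var 5) (Meet (Var 4) (Join (Var 0) (Var 3)))) \<or> lt_eval V (Join (Var 4) (Var 5)) \<le> lt_eval V (Join (Var 5) (Meet (Var 4) (Join (Var 0) (Var 3)))) \<or> lt_eval V (Meet (Join (Var 0) (Var 3)) (Join (Var 4) (Var 5))) \<le> lt_eval V (Var 5) \<or> lt_eval V (Meet (Join (Var 0) (Var 3)) (Join (Var 4) (Var 5))) \<le> lt_eval V (Meet (Var 4) (Join (Var 0) (Var 3)))" .
    then show ?thesis
    proof (elim disjE)
      assume A2: "lt_eval V (Join (Var 0) (Var 3)) \<le> lt_eval V (Join (Var 5) (Meet (Var 4) (Join (Var 0) (Var 3))))"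
      have "lt_eval V (Var 0) \<le> lt_eval V (substX (Meet (Var 6) (Var 0)) (Join (Var 0) (Var 3)))" by (rule CHK[OF inN rel]) (simp add: chk_def PL_def alln5_def rel5_def substX_def)
      also have "... = lt_eval V (substX (Meet (Var 6) (Var 0)) (Meet (Join (Var 0) (Var 3)) (Join (Var 5) (Meet (Var 4) (Join (Var 0) (Var 3))))))" by (rule poly[OF AE[OF A2], symmetric])
      also have "... \<le> lt_eval V (substX (Join (Var 6) (Var 3)) (Meet (Join (Var 0) (Var 1)) (Join (Var 2) (Meet (Var 0) (Var 5)))))" by (rule CHK[OF inN rel]) (simp add: chk_def PL_def alln5_def rel5_def substX_def)
      also have "... = lt_eval V (substX (Join (Var 6) (Var 3)) (Meet (Meet (Join (Var 0) (Var 1)) (Join (Var 2) (Meet (Var 0) (Var 5)))) (Meet (Var 2) (Join (Var 0) (Var 1)))))" by (rule poly[OF AE[OF A4], symmetric])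
      also have "... \<le> lt_eval V (Var 4)" by (rule CHK[OF inN rel]) (simp add: chk_def PL_def alln5_def rel5_def substX_def)
      finally have "lt_eval V (Var 0) \<le> lt_eval V (Var 4)" .
      then show ?thesis using hyps by (simp add: V_def)
    next
      assume A2: "lt_eval V (Join (Var 4) (Var 5)) \<le> lt_eval V (Join (Var 5) (Meet (Var 4) (Join (Var 0) (Var 3))))"
      have "lt_eval V (Join (Var 0) (Var 4)) \<le> lt_eval V (substX (Join (Var 6) (Var 0)) (Join (Var 4) (Var 5)))" by (rule CHK[OF inN rel]) (simp add: chk_def PL_def alln5_def rel5_def substX_def)
      also have "... = lt_eval V (substX (Join (Var 6) (Var 0)) (Meet (Join (Var 4) (Var 5)) (Join (Var 5) (Meet (Var 4) (Join (Var 0) (Var 3))))))" by (rule poly[OF AE[OF A2], symmetric])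
      also have "... \<le> lt_eval V (Join (Var 0) (Var 3))" by (rule CHK[OF inN rel]) (simp add: chk_def PL_def alln5_def rel5_def substX_def)
      finally have "lt_eval V (Join (Var 0) (Var 4)) \<le> lt_eval V (Join (Var 0) (Var 3))" .
      then show ?thesis using hyps by (simp add: V_def)
    next
      assume A2: "lt_eval V (Meet (Join (Var 0) (Var 3)) (Join (Var 4) (Var 5))) \<le> lt_eval V (Var 5)"
      have "lt_eval V (Join (Var 0) (Var 3)) \<le> lt_eval V (substX (Join (Var 6) (Var 0)) (Meet (Join (Var 0) (Var 3)) (Join (Var 4) (Var 5))))" by (rule CHK[OF inN rel]) (simp add: chk_def PL_def alln5_def rel5_def substX_def)
      also have "... = lt_eval V (substX (Join (Var 6) (Var 0)) (Meet (Meet (Join (Var 0) (Var 3)) (Join (Var 4) (Var 5))) (Var 5)))" by (rule poly[OF AE[OF A2], symmetric])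
      also have "... \<le> lt_eval V (Join (Var 0) (Var 2))" by (rule CHK[OF inN rel]) (simp add: chk_def PL_def alln5_def rel5_def substX_def)
      finally have "lt_eval V (Join (Var 0) (Var 3)) \<le> lt_eval V (Join (Var 0) (Var 2))" .
      then show ?thesis using hyps by (simp add: V_def)
    next
      assume A2: "lt_eval V (Meet (Join (Var 0) (Var 3)) (Join (Var 4) (Var 5))) \<le> lt_eval V (Meet (Var 4) (Join (Var 0) (Var 3)))"
      have "lt_eval V (Var 5) \<le> lt_eval V (substX (Meet (Var 6) (Var 5)) (Meet (Join (Var 0) (Var 3)) (Join (Var 4) (Var 5))))" by (rule CHK[OF inN rel]) (simp add: chk_def PL_def alln5_def rel5_def substX_def)
      also have "... = lt_eval V (substX (Meet (Var 6) (Var 5)) (Meet (Meet (Join (Var 0) (Var 3)) (Join (Var 4) (Var 5))) (Meet (Var 4) (Join (Var 0) (Var 3)))))" by (rule poly[OF AE[OF A2], symmetric])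
      also have "... \<le> lt_eval V (Meet (Join (Var 0) (Var 2)) (Var 4))" by (rule CHK[OF inN rel]) (simp add: chk_def PL_def alln5_def rel5_def substX_def)
      finally have "lt_eval V (Var 5) \<le> lt_eval V (Meet (Join (Var 0) (Var 2)) (Var 4))" .
      then show ?thesis using hyps by (simp add: V_def)
    qed
  qed
qed

theorem theorem5p4:
  fixes f :: "'a::lattice \<Rightarrow> 'x lterm"
    and a b1 b2 b3 b4 b5 :: "'a"
  assumes "embeds_in_free_lattice f"
    and "in_var_N5 TYPE('a)"
    and "incomparable a b1" "incomparable a b2" "incomparable a b3"
        "incomparable a b4" "incomparable a b5"
    and "b1 < b2" "b2 < b3" "b3 < b4" "b4 < b5"
    and "sup a b1 < sup a b2" "sup a b2 < sup a b3"
        "sup a b3 < sup a b4" "sup a b4 < sup a b5"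
    and "inf (sup a b4) b5 \<noteq> b4"
  shows "covers (sup a b3) (inf (sup a b3) b5)"
proof -
  have na5: "\<not> a \<le> b5" and nb2: "\<not> b2 \<le> a" using assms(4,7) unfolding incomparable_def by auto
  have lt: "inf (sup a b3) b5 < sup a b3"
  proof -
    have "inf (sup a b3) b5 \<le> sup a b3" by simp
    moreover have "inf (sup a b3) b5 \<noteq> sup a b3"
    proof
      assume "inf (sup a b3) b5 = sup a b3"
      then have "sup a b3 \<le> b5" by (metis inf.orderI inf_commute inf_le2)
      then show False using na5 by simp
    qed
    ultimately show ?thesis by (simp add: less_le)
  qed
  have nw: "\<not> (\<exists>w. inf (sup a b3) b5 < w \<and> w < sup a b3)"
  proof
    assume "\<exists>w. inf (sup a b3) b5 < w \<and> w < sup a b3"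
    then obtain w where w1: "inf (sup a b3) b5 < w" and w2: "w < sup a b3" by blast
    have "w \<le> inf (sup a b3) b5 \<or> sup a b3 \<le> w"
      apply (rule core[OF assms(1) assms(2), of b2 b3 b4 b5 a w])
      using assms w1 w2 na5 nb2 by (auto simp: less_le_not_le)
    then show False using w1 w2 by (auto simp: less_le_not_le)
  qed
  show ?thesis unfolding covers_def using lt nw by blast
qed

end
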